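(* Let $u:D_O(1)\to\mathbb R$ be harmonic on the Euclidean unit disc $D_O(1)=\{y\in\mathbb R^2:|y|<1\}$ with $\int_{D_O(1)}|\nabla^{\mathbb R^2}u|^2\,dy_1\,dy_2<\infty$. Then $$\int_{D_O(1)}(1-|y|)^2|\nabla^{\mathbb R^2}\nabla^{\mathbb R^2}u|^2\,dy_1\,dy_2\le\int_{D_O(1)}|\nabla^{\mathbb R^2}u|^2\,dy_1\,dy_2,$$ where $|\nabla^{\mathbb R^2}\nabla^{\mathbb R^2}u|^2=\sum_{j,k=1}^2|\partial_{y_j}\partial_{y_k}u|^2$.
   Context: $\nabla^{\mathbb R^2}u=(\partial_{y_1}u,\partial_{y_2}u)$ is the Euclidean gradient. *)

theory Defs
  imports "HOL-Analysis.Analysis"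
begin

definition partial :: "(real^2 \<Rightarrow> real) \<Rightarrow> 2 \<Rightarrow> real^2 \<Rightarrow> real" where
  "partial u j y = frechet_derivative u (at y) (axis j 1)"

definition harmonic_on :: "(real^2 \<Rightarrow> real) \<Rightarrow> (real^2) set \<Rightarrow> bool" where
  "harmonic_on u S \<longleftrightarrow>
     (\<forall>y\<in>S. u differentiable (at y)) \<and>
     (\<forall>k. \<forall>y\<in>S. partial u k differentiable (at y)) \<and>
     (\<forall>j k. continuous_on S (partial (partial u k) j)) \<and>
     (\<forall>y\<in>S. (\<Sum>j\<in>UNIV. partial (partial u j) j y) = 0)"

definition grad_sq :: "(real^2 \<Rightarrow> real) \<Rightarrow> real^2 \<Rightarrow> real" where
  "grad_sq u y = (\<Sum>k\<in>UNIV. (partial u k y)^2)"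

definition hess_sq :: "(real^2 \<Rightarrow> real) \<Rightarrow> real^2 \<Rightarrow> real" where
  "hess_sq u y = (\<Sum>j\<in>UNIV. \<Sum>k\<in>UNIV. (partial (partial u k) j y)^2)"

end

theory Submission
  imports Defs "HOL-Complex_Analysis.Complex_Analysis"
begin


lemma line_deriv:
  fixes g :: "real^2 \<Rightarrow> real"
  assumes "g differentiable (at (a + s *\<^sub>R v))"
  shows "((\<lambda>t. g (a + t *\<^sub>R v)) has_real_derivative frechet_derivative g (at (a + s *\<^sub>R v)) v) (at s)"
proof -
  let ?D = "frechet_derivative g (at (a + s *\<^sub>R v))"
  have D: "(g has_derivative ?D) (at (a + s *\<^sub>R v))"
    using assms frechet_derivative_works by blast
  have L: "((\<lambda>t. a + t *\<^sub>R v) has_derivative (\<lambda>t. t *\<^sub>R v)) (at s)"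
    by (auto intro!: derivative_eq_intros)
  have "((g \<circ> (\<lambda>t. a + t *\<^sub>R v)) has_derivative (?D \<circ> (\<lambda>t. t *\<^sub>R v))) (at s)"
    using diff_chain_at[OF L, of g ?D] D by simp
  moreover have "\<And>x. x * ?D v = (?D \<circ> (\<lambda>t. t *\<^sub>R v)) x"
    using linear_cmul[OF has_derivative_linear[OF D]] by simp
  ultimately show ?thesis
    by (auto intro: has_derivative_imp_has_field_derivative simp: comp_def)
qed

lemma norm_two_axes: "norm (s *\<^sub>R axis i (1::real) + t *\<^sub>R axis j 1 :: real^2) \<le> \<bar>s\<bar> + \<bar>t\<bar>"
  by (rule order_trans[OF norm_triangle_ineq]) simp

lemma clairaut:
  fixes u :: "real^2 \<Rightarrow> real"
  assumes S: "open S" and yS: "y \<in> S"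
    and d0: "\<forall>x\<in>S. u differentiable (at x)"
    and d1: "\<forall>k. \<forall>x\<in>S. partial u k differentiable (at x)"
    and c2: "\<forall>j k. continuous_on S (partial (partial u k) j)"
  shows "partial (partial u 1) 2 y = partial (partial u 2) 1 y"
proof (rule ccontr)
  define A where "A = partial (partial u 1) 2"
  define B where "B = partial (partial u 2) 1"
  define e1 :: "real^2" where "e1 = axis 1 1"
  define e2 :: "real^2" where "e2 = axis 2 1"
  assume ne: "partial (partial u 1) 2 y \<noteq> partial (partial u 2) 1 y"
  define d where "d = \<bar>A y - B y\<bar>"
  have d: "d > 0" using ne by (simp add: d_def A_def B_def)
  have cA: "isCont A y" and cB: "isCont B y"
    using c2 S yS continuous_on_eq_continuous_at unfolding A_def B_def by blast+
  obtain dA where dA: "dA > 0" "\<And>x. dist x y < dA \<Longrightarrow> dist (A x) (A y) < d/2"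
    using cA[unfolded continuous_at_eps_delta] d by (meson half_gt_zero)
  obtain dB where dB: "dB > 0" "\<And>x. dist x y < dB \<Longrightarrow> dist (B x) (B y) < d/2"
    using cB[unfolded continuous_at_eps_delta] d by (meson half_gt_zero)
  obtain dS where dS: "dS > 0" "ball y dS \<subseteq> S"
    using S yS open_contains_ball by blast
  define \<delta> where "\<delta> = min dS (min dA dB)"
  have \<delta>: "\<delta> > 0" using dA dB dS by (simp add: \<delta>_def)
  define h where "h = \<delta> / 4"
  have h: "h > 0" using \<delta> by (simp add: h_def)
  define P where "P = (\<lambda>s t. y + (s *\<^sub>R e1 + t *\<^sub>R e2))"
  have Pnear: "dist (P s t) y < \<delta>" if "0 \<le> s" "s \<le> h" "0 \<le> t" "t \<le> h" for s t
  proof -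
    have "dist (P s t) y = norm (s *\<^sub>R e1 + t *\<^sub>R e2)"
      by (simp add: P_def dist_norm)
    also have "\<dots> \<le> \<bar>s\<bar> + \<bar>t\<bar>" unfolding e1_def e2_def by (rule norm_two_axes)
    also have "\<dots> < \<delta>" using that h_def \<delta> by auto
    finally show ?thesis .
  qed
  have PS: "P s t \<in> S" if "0 \<le> s" "s \<le> h" "0 \<le> t" "t \<le> h" for s t
    using Pnear[OF that] dS \<delta>_def by (auto simp: dist_commute)
  have PA: "\<bar>A (P s t) - A y\<bar> < d/2" if "0 \<le> s" "s \<le> h" "0 \<le> t" "t \<le> h" for s t
    using Pnear[OF that] dA \<delta>_def by (auto simp: dist_real_def)
  have PB: "\<bar>B (P s t) - B y\<bar> < d/2" if "0 \<le> s" "s \<le> h" "0 \<le> t" "t \<le> h" for s t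
    using Pnear[OF that] dB \<delta>_def by (auto simp: dist_real_def)
  have P1: "P s t = (y + t *\<^sub>R e2) + s *\<^sub>R e1" for s t by (simp add: P_def algebra_simps)
  have P2: "P s t = (y + s *\<^sub>R e1) + t *\<^sub>R e2" for s t by (simp add: P_def algebra_simps)
  have du1: "((\<lambda>s. u (P s t)) has_real_derivative partial u 1 (P s t)) (at s)"
    if "0 \<le> s" "s \<le> h" "0 \<le> t" "t \<le> h" for s t
    using line_deriv[of u "y + t *\<^sub>R e2" s e1] d0 PS[OF that]
    unfolding P1 partial_def e1_def by simp
  have du2: "((\<lambda>t. u (P s t)) has_real_derivative partial u 2 (P s t)) (at t)"
    if "0 \<le> s" "s \<le> h" "0 \<le> t" "t \<le> h" for s t
    using line_deriv[of u "y + s *\<^sub>R e1" t e2] d0 PS[OF that]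
    unfolding P2 partial_def e2_def by simp
  have dA2: "((\<lambda>t. partial u 1 (P s t)) has_real_derivative A (P s t)) (at t)"
    if "0 \<le> s" "s \<le> h" "0 \<le> t" "t \<le> h" for s t
    using line_deriv[of "partial u 1" "y + s *\<^sub>R e1" t e2] d1 PS[OF that]
    unfolding P2 A_def e2_def by (simp add: partial_def[of "partial u 1"])
  have dB1: "((\<lambda>s. partial u 2 (P s t)) has_real_derivative B (P s t)) (at s)"
    if "0 \<le> s" "s \<le> h" "0 \<le> t" "t \<le> h" for s t
    using line_deriv[of "partial u 2" "y + t *\<^sub>R e2" s e1] d1 PS[OF that]
    unfolding P1 B_def e1_def by (simp add: partial_def[of "partial u 2"])
  define \<Delta> where "\<Delta> = u (P h h) - u (P h 0) - u (P 0 h) + u (P 0 0)"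
  obtain \<xi> where \<xi>: "0 < \<xi>" "\<xi> < h"
    "(u (P h h) - u (P h 0)) - (u (P 0 h) - u (P 0 0)) = (h - 0) * (partial u 1 (P \<xi> h) - partial u 1 (P \<xi> 0))"
  proof -
    have "\<And>x. 0 \<le> x \<Longrightarrow> x \<le> h \<Longrightarrow> ((\<lambda>s. u (P s h) - u (P s 0)) has_real_derivative (partial u 1 (P x h) - partial u 1 (P x 0))) (at x)"
      using h by (intro DERIV_diff du1) auto
    from MVT2[OF h this] show ?thesis using that by auto
  qed
  obtain \<eta> where \<eta>: "0 < \<eta>" "\<eta> < h"
    "partial u 1 (P \<xi> h) - partial u 1 (P \<xi> 0) = (h - 0) * A (P \<xi> \<eta>)"
  proof -
    have "\<And>x. 0 \<le> x \<Longrightarrow> x \<le> h \<Longrightarrow> ((\<lambda>t. partial u 1 (P \<xi> t)) has_real_derivative A (P \<xi> x)) (at x)"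
      using h \<xi> by (intro dA2) auto
    from MVT2[OF h this] show ?thesis using that by auto
  qed
  have \<Delta>1: "\<Delta> = h^2 * A (P \<xi> \<eta>)"
    using \<xi>(3) \<eta>(3) by (simp add: \<Delta>_def power2_eq_square algebra_simps)
  obtain \<zeta> where \<zeta>: "0 < \<zeta>" "\<zeta> < h"
    "(u (P h h) - u (P 0 h)) - (u (P h 0) - u (P 0 0)) = (h - 0) * (partial u 2 (P h \<zeta>) - partial u 2 (P 0 \<zeta>))"
  proof -
    have "\<And>x. 0 \<le> x \<Longrightarrow> x \<le> h \<Longrightarrow> ((\<lambda>t. u (P h t) - u (P 0 t)) has_real_derivative (partial u 2 (P h x) - partial u 2 (P 0 x))) (at x)"
      using h by (intro DERIV_diff du2) auto
    from MVT2[OF h this] show ?thesis using that by auto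
  qed
  obtain \<sigma> where \<sigma>: "0 < \<sigma>" "\<sigma> < h"
    "partial u 2 (P h \<zeta>) - partial u 2 (P 0 \<zeta>) = (h - 0) * B (P \<sigma> \<zeta>)"
  proof -
    have "\<And>x. 0 \<le> x \<Longrightarrow> x \<le> h \<Longrightarrow> ((\<lambda>s. partial u 2 (P s \<zeta>)) has_real_derivative B (P x \<zeta>)) (at x)"
      using h \<zeta> by (intro dB1) auto
    from MVT2[OF h this] show ?thesis using that by auto
  qed
  have \<Delta>2: "\<Delta> = h^2 * B (P \<sigma> \<zeta>)"
    using \<zeta>(3) \<sigma>(3) by (simp add: \<Delta>_def power2_eq_square algebra_simps)
  have "A (P \<xi> \<eta>) = B (P \<sigma> \<zeta>)" using \<Delta>1 \<Delta>2 h by simp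
  moreover have "\<bar>A (P \<xi> \<eta>) - A y\<bar> < d/2" using PA \<xi> \<eta> by simp
  moreover have "\<bar>B (P \<sigma> \<zeta>) - B y\<bar> < d/2" using PB \<sigma> \<zeta> by simp
  ultimately show False using d_def by linarith
qed



definition cpx :: "real^2 \<Rightarrow> complex" where "cpx y = Complex (y$1) (y$2)"
definition vv :: "complex \<Rightarrow> real^2" where "vv z = (\<chi> i. if i = 1 then Re z else Im z)"

lemma vv_nth [simp]: "vv z $ 1 = Re z" "vv z $ 2 = Im z"
  by (simp_all add: vv_def)

lemma vv_cpx [simp]: "vv (cpx y) = y"
  by (simp add: vv_def cpx_def vec_eq_iff forall_2)

lemma cpx_vv [simp]: "cpx (vv z) = z"
  by (simp add: cpx_def complex_eq_iff)

lemma norm_vec2: "norm (y::real^2) = sqrt ((y$1)^2 + (y$2)^2)"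
  by (simp add: norm_vec_def L2_set_def sum_2)

lemma norm_vv [simp]: "norm (vv z) = cmod z"
  by (simp add: norm_vec2 cmod_def)

lemma norm_cpx [simp]: "cmod (cpx y) = norm y"
  by (metis norm_vv vv_cpx)

lemma vv_decomp: "vv w = Re w *\<^sub>R axis 1 1 + Im w *\<^sub>R axis 2 1"
  by (simp add: vec_eq_iff forall_2 axis_def)

lemma bounded_linear_vv: "bounded_linear vv"
proof -
  have "linear vv" by (rule linearI) (simp_all add: vec_eq_iff forall_2)
  then show ?thesis by (simp add: linear_conv_bounded_linear)
qed

lemma has_derivative_vv [derivative_intros]: "(vv has_derivative vv) F"
  using bounded_linear_vv by (rule bounded_linear_imp_has_derivative)




definition fh :: "(real^2 \<Rightarrow> real) \<Rightarrow> complex \<Rightarrow> complex" where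
  "fh u z = Complex (partial u 1 (vv z)) (- partial u 2 (vv z))"

definition fd :: "(real^2 \<Rightarrow> real) \<Rightarrow> complex \<Rightarrow> complex" where
  "fd u z = Complex (partial (partial u 1) 1 (vv z)) (- partial (partial u 2) 1 (vv z))"

lemma harmonic_parts:
  assumes "harmonic_on u S"
  shows "\<forall>y\<in>S. u differentiable (at y)" "\<forall>k. \<forall>y\<in>S. partial u k differentiable (at y)"
    "\<forall>j k. continuous_on S (partial (partial u k) j)"
    "\<And>y. y \<in> S \<Longrightarrow> partial (partial u 2) 2 y = - partial (partial u 1) 1 y"
  using assms unfolding harmonic_on_def by (auto simp: sum_2 eq_neg_iff_add_eq_0 add.commute)

lemma frechet_axis_expand:
  assumes "linear D"
  shows "D (vv w) = Re w * D (axis 1 1) + Im w * D (axis 2 1)"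
  using assms by (simp add: vv_decomp linear_add linear_cmul)

lemma fh_deriv:
  assumes H: "harmonic_on u (ball 0 1)" and z: "cmod z < 1"
  shows "(fh u has_field_derivative fd u z) (at z)"
proof -
  let ?y = "vv z"
  have yS: "?y \<in> ball 0 1" using z by simp
  note hp = harmonic_parts[OF H]
  define DP where "DP = frechet_derivative (partial u 1) (at ?y)"
  define DQ where "DQ = frechet_derivative (partial u 2) (at ?y)"
  have dP: "(partial u 1 has_derivative DP) (at ?y)"
    using hp(2) yS frechet_derivative_works DP_def by blast
  have dQ: "(partial u 2 has_derivative DQ) (at ?y)"
    using hp(2) yS frechet_derivative_works DQ_def by blast
  have lP: "linear DP" using dP by (rule has_derivative_linear)
  have lQ: "linear DQ" using dQ by (rule has_derivative_linear)
  have sym: "partial (partial u 1) 2 ?y = partial (partial u 2) 1 ?y"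
    by (rule clairaut[OF open_ball yS hp(1) hp(2) hp(3)])
  have lap: "partial (partial u 2) 2 ?y = - partial (partial u 1) 1 ?y"
    using hp(4) yS by blast
  have e: "DP (axis 1 1) = partial (partial u 1) 1 ?y" "DP (axis 2 1) = partial (partial u 2) 1 ?y"
       "DQ (axis 1 1) = partial (partial u 2) 1 ?y" "DQ (axis 2 1) = - partial (partial u 1) 1 ?y"
    using sym lap by (simp_all add: DP_def DQ_def partial_def[of "partial u 1"] partial_def[of "partial u 2"])
  have F: "((\<lambda>y. complex_of_real (partial u 1 y) + \<i> * complex_of_real (- partial u 2 y)) has_derivative
            (\<lambda>h. complex_of_real (DP h) + \<i> * complex_of_real (- DQ h))) (at ?y)"
    by (intro derivative_eq_intros dP dQ) (auto simp: dP dQ)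
  have G: "((\<lambda>w. complex_of_real (partial u 1 (vv w)) + \<i> * complex_of_real (- partial u 2 (vv w))) has_derivative
            (\<lambda>w. complex_of_real (DP (vv w)) + \<i> * complex_of_real (- DQ (vv w)))) (at z)"
    using diff_chain_at[OF has_derivative_vv F] by (simp add: comp_def)
  have fheq: "fh u = (\<lambda>w. complex_of_real (partial u 1 (vv w)) + \<i> * complex_of_real (- partial u 2 (vv w)))"
    by (auto simp: fun_eq_iff fh_def complex_eq_iff)
  show ?thesis
    unfolding fheq
  proof (rule has_derivative_imp_has_field_derivative[OF G])
    fix w
    show "w * fd u z = complex_of_real (DP (vv w)) + \<i> * complex_of_real (- DQ (vv w))"
      unfolding frechet_axis_expand[OF lP] frechet_axis_expand[OF lQ] e
      by (simp add: fd_def complex_eq_iff algebra_simps)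
  qed
qed

lemma fh_holo:
  assumes H: "harmonic_on u (ball 0 1)"
  shows "fh u holomorphic_on ball 0 1" 
  unfolding holomorphic_on_def field_differentiable_def
  using fh_deriv[OF H] has_field_derivative_at_within by (fastforce simp: dist_norm)

lemma deriv_fh:
  assumes H: "harmonic_on u (ball 0 1)" and z: "cmod z < 1"
  shows "deriv (fh u) z = fd u z"
  using fh_deriv[OF assms] DERIV_imp_deriv by blast

lemma grad_sq_fh:
  "grad_sq u y = (cmod (fh u (cpx y)))^2"
  by (simp add: grad_sq_def fh_def sum_2 cmod_power2)

lemma hess_sq_fd:
  assumes H: "harmonic_on u (ball 0 1)" and y: "norm y < 1"
  shows "hess_sq u y = 2 * (cmod (fd u (cpx y)))^2"
proof -
  note hp = harmonic_parts[OF H]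
  have yS: "y \<in> ball 0 1" using y by simp
  have sym: "partial (partial u 1) 2 y = partial (partial u 2) 1 y"
    by (rule clairaut[OF open_ball yS hp(1) hp(2) hp(3)])
  have lap: "partial (partial u 2) 2 y = - partial (partial u 1) 1 y"
    using hp(4) yS by blast
  show ?thesis
    by (simp add: hess_sq_def fd_def sum_2 cmod_power2 sym lap)
qed




lemma int_indicator_const:
  "(\<integral>\<theta>. indicator {-pi..pi} \<theta> *\<^sub>R (c::'a::{banach,second_countable_topology}) \<partial>lborel) = (2*pi) *\<^sub>R c"
proof -
  have "(\<integral>\<theta>. indicator {-pi..pi} \<theta> *\<^sub>R c \<partial>lborel) = (\<integral>\<theta>. indicator {-pi..pi} \<theta> \<partial>lborel) *\<^sub>R c"
    by (rule integral_scaleR_left) (simp add: integrable_real_indicator)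
  also have "(\<integral>\<theta>. indicator {-pi..pi} \<theta> \<partial>lborel) = 2 * pi"
    by (simp add: measure_lborel_Icc)
  finally show ?thesis .
qed

lemma int_cis:
  fixes k :: int
  shows "(\<integral>\<theta>. indicator {-pi..pi} \<theta> *\<^sub>R cis (of_int k * \<theta>) \<partial>lborel) = (if k = 0 then 2 * pi else 0)"
proof (cases "k = 0")
  case True
  then show ?thesis using int_indicator_const[of "1::complex"] by (simp add: scaleR_conv_of_real)
next
  case False
  have ci: "continuous_on {-pi..pi} (\<lambda>\<theta>. cis (of_int k * \<theta>))"
    by (intro continuous_intros)
  have int: "integrable lborel (\<lambda>\<theta>. indicator {-pi..pi} \<theta> *\<^sub>R cis (of_int k * \<theta>))"
    by (rule borel_integrable_compact[OF compact_Icc ci])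
  have eq: "(\<integral>\<theta>. indicator {-pi..pi} \<theta> *\<^sub>R cis (of_int k * \<theta>) \<partial>lborel) = integral {-pi..pi} (\<lambda>\<theta>. cis (of_int k * \<theta>))"
    using set_borel_integral_eq_integral(2)[of "{-pi..pi}" "\<lambda>\<theta>. cis (of_int k * \<theta>)"] int
    by (simp add: set_integrable_def set_lebesgue_integral_def)
  define F where "F = (\<lambda>\<theta>::real. cis (of_int k * \<theta>) / (\<i> * of_int k))"
  have "((\<lambda>\<theta>. cis (of_int k * \<theta>)) has_integral (F pi - F (-pi))) {-pi..pi}"
  proof (rule fundamental_theorem_of_calculus)
    show "-pi \<le> pi" by simp
    fix x assume "x \<in> {-pi..pi}"
    have G: "((\<lambda>w. exp (\<i> * of_int k * w) / (\<i> * of_int k)) has_field_derivative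
           (exp (\<i> * of_int k * of_real x) * (\<i> * of_int k)) / (\<i> * of_int k)) (at (of_real x))"
      using False by (intro derivative_eq_intros) auto
    have "(\<lambda>\<theta>::real. exp (\<i> * of_int k * complex_of_real \<theta>) / (\<i> * of_int k)) = F"
      by (auto simp: F_def cis_conv_exp fun_eq_iff mult_ac)
    moreover have "exp (\<i> * of_int k * of_real x) * (\<i> * of_int k) / (\<i> * of_int k) = cis (of_int k * x)"
      using False by (simp add: cis_conv_exp mult_ac)
    ultimately show "(F has_vector_derivative cis (of_int k * x)) (at x within {-pi..pi})"
      using has_vector_derivative_real_field[OF G] by simp
  qed
  moreover have "F pi = F (-pi)"
  proof -
    have "cis (of_int k * pi) = cis (of_int k * - pi) * cis (2 * pi * of_int k)"
      by (simp add: cis_mult algebra_simps)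
    also have "cis (2 * pi * of_int k) = 1" by (rule cis_multiple_2pi) simp
    finally show ?thesis by (simp add: F_def)
  qed
  ultimately show ?thesis using eq False by (simp add: integral_unique)
qed




lemma integral_series_Icc:
  fixes h :: "nat \<Rightarrow> real \<Rightarrow> 'a::{banach,second_countable_topology}"
  assumes sums: "\<And>\<theta>. \<theta> \<in> {-pi..pi} \<Longrightarrow> (\<lambda>n. h n \<theta>) sums H \<theta>"
    and cont: "\<And>n. continuous_on {-pi..pi} (h n)"
    and bnd: "\<And>n \<theta>. \<theta> \<in> {-pi..pi} \<Longrightarrow> norm (h n \<theta>) \<le> b n"
    and sb: "summable b"
  shows "(\<lambda>n. \<integral>\<theta>. indicator {-pi..pi} \<theta> *\<^sub>R h n \<theta> \<partial>lborel) sums (\<integral>\<theta>. indicator {-pi..pi} \<theta> *\<^sub>R H \<theta> \<partial>lborel)"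
proof -
  let ?S = "{-pi..pi}"
  define f where "f = (\<lambda>n \<theta>. indicator ?S \<theta> *\<^sub>R h n \<theta>)"
  have b0: "0 \<le> b n" for n using bnd[of "-pi" n] by (auto intro: order_trans[OF norm_ge_zero])
  have int: "integrable lborel (f n)" for n
    unfolding f_def by (rule borel_integrable_compact[OF compact_Icc cont])
  have nb: "norm (f n \<theta>) \<le> b n" for n \<theta>
    using bnd[of \<theta> n] b0[of n] by (auto simp: f_def indicator_def)
  have sn: "summable (\<lambda>n. norm (f n \<theta>))" for \<theta>
    by (rule summable_comparison_test'[OF sb, of 0]) (use nb in auto)
  have ib: "(\<integral>\<theta>. norm (f n \<theta>) \<partial>lborel) \<le> 2 * pi * b n" for n
  proof -
    have "(\<integral>\<theta>. norm (f n \<theta>) \<partial>lborel) \<le> (\<integral>\<theta>. indicator ?S \<theta> *\<^sub>R b n \<partial>lborel)"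
    proof (rule integral_mono)
      show "integrable lborel (\<lambda>\<theta>. norm (f n \<theta>))" using int by simp
      show "integrable lborel (\<lambda>\<theta>. indicator ?S \<theta> *\<^sub>R b n)"
        by (rule borel_integrable_compact[OF compact_Icc]) simp
      fix \<theta> show "norm (f n \<theta>) \<le> indicator ?S \<theta> *\<^sub>R b n"
        using bnd[of \<theta> n] by (auto simp: f_def indicator_def)
    qed
    also have "\<dots> = 2 * pi * b n" by (simp add: int_indicator_const)
    finally show ?thesis .
  qed
  have si: "summable (\<lambda>n. \<integral>\<theta>. norm (f n \<theta>) \<partial>lborel)"
    by (rule summable_comparison_test'[of "\<lambda>n. 2 * pi * b n" 0])
       (use ib sb in \<open>auto intro: summable_mult\<close>)
  have "(\<integral>\<theta>. (\<Sum>n. f n \<theta>) \<partial>lborel) = (\<Sum>n. \<integral>\<theta>. f n \<theta> \<partial>lborel)"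
    by (rule integral_suminf[OF int _ si]) (simp add: sn)
  moreover have "(\<Sum>n. f n \<theta>) = indicator ?S \<theta> *\<^sub>R H \<theta>" for \<theta>
  proof (cases "\<theta> \<in> ?S")
    case True
    then show ?thesis using sums_scaleR_right[OF sums[OF True], of "indicator ?S \<theta>"]
      by (simp add: f_def sums_iff)
  qed (simp add: f_def)
  moreover have "summable (\<lambda>n. \<integral>\<theta>. f n \<theta> \<partial>lborel)"
    by (rule summable_norm_cancel, rule summable_comparison_test'[OF si, of 0])
       (auto intro: integral_norm_bound)
  ultimately show ?thesis by (simp add: f_def sums_iff)
qed




lemma parseval_circle:
  fixes g :: "complex \<Rightarrow> complex"
  assumes hol: "g holomorphic_on ball 0 1" and z: "cmod z < 1"
  defines "c \<equiv> \<lambda>n. (deriv ^^ n) g 0 / fact n"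
  shows "(\<lambda>n. 2 * pi * ((cmod (c n))^2 * cmod z ^ (2*n))) sums
           (\<integral>\<theta>. indicator {-pi..pi} \<theta> *\<^sub>R (cmod (g (cis \<theta> * z)))^2 \<partial>lborel)"
proof -
  let ?S = "{-pi..pi}"
  define a where "a = (\<lambda>n. c n * z ^ n)"
  define G where "G = (\<lambda>\<theta>. g (cis \<theta> * z))"
  have inball: "cis \<theta> * z \<in> ball 0 1" for \<theta> using z by (simp add: norm_mult)
  have ser: "(\<lambda>n. a n * cis (real n * \<theta>)) sums G \<theta>" for \<theta>
  proof -
    have "(\<lambda>n. c n * (cis \<theta> * z - 0) ^ n) sums G \<theta>"
      unfolding c_def G_def by (rule holomorphic_power_series[OF hol inball])
    moreover have "c n * (cis \<theta> * z - 0) ^ n = a n * cis (real n * \<theta>)" for n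
      using Complex.DeMoivre[of \<theta> n] by (simp add: a_def power_mult_distrib)
    ultimately show ?thesis by simp
  qed
  have sa: "summable (\<lambda>n. norm (a n))"
  proof -
    define r where "r = (cmod z + 1) / 2"
    have r: "cmod z < r" "r < 1" using z by (auto simp: r_def)
    have r0: "0 < r" unfolding r_def by (simp add: add_nonneg_pos)
    have rb: "complex_of_real r \<in> ball 0 1" using r r0 by simp
    have "summable (\<lambda>n. c n * complex_of_real r ^ n)"
      using holomorphic_power_series[OF hol rb] unfolding c_def by (simp add: sums_iff)
    from powser_insidea[OF this, of z] r norm_ge_zero[of z] show ?thesis
      by (simp add: a_def)
  qed
  have gc: "continuous_on ?S G"
  proof -
    have "continuous_on (ball 0 1) g" using hol by (rule holomorphic_on_imp_continuous_on)
    then show ?thesis unfolding G_def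
      by (rule continuous_on_compose2) (auto intro!: continuous_intros simp: norm_mult z)
  qed
  have Gb: "norm (G \<theta>) \<le> (\<Sum>n. norm (a n))" for \<theta>
  proof -
    have "norm (G \<theta>) = norm (\<Sum>n. a n * cis (real n * \<theta>))" using ser[of \<theta>] by (simp add: sums_iff)
    also have "\<dots> \<le> (\<Sum>n. norm (a n * cis (real n * \<theta>)))"
      by (rule summable_norm) (simp add: norm_mult sa)
    also have "\<dots> = (\<Sum>n. norm (a n))" by (simp add: norm_mult)
    finally show ?thesis .
  qed
  define K where "K = (\<Sum>n. norm (a n))"
  have inner: "(\<integral>\<theta>. indicator ?S \<theta> *\<^sub>R (cis (real n * \<theta>) * cnj (G \<theta>)) \<partial>lborel) = 2 * pi * cnj (a n)" for n
  proof -
    have s1: "(\<lambda>m. cnj (a m) * cis (of_int (int n - int m) * \<theta>)) sums (cis (real n * \<theta>) * cnj (G \<theta>))" for \<theta>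
    proof -
      have "(\<lambda>m. cnj (a m * cis (real m * \<theta>))) sums cnj (G \<theta>)" using ser[of \<theta>] by (subst sums_cnj)
      from sums_mult[OF this, of "cis (real n * \<theta>)"]
      show ?thesis by (simp add: cis_cnj cis_mult algebra_simps)
    qed
    have "(\<lambda>m. \<integral>\<theta>. indicator ?S \<theta> *\<^sub>R (cnj (a m) * cis (of_int (int n - int m) * \<theta>)) \<partial>lborel) sums
          (\<integral>\<theta>. indicator ?S \<theta> *\<^sub>R (cis (real n * \<theta>) * cnj (G \<theta>)) \<partial>lborel)"
      by (rule integral_series_Icc[OF s1 _ _ sa]) (auto intro!: continuous_intros simp: norm_mult)
    moreover have "(\<integral>\<theta>. indicator ?S \<theta> *\<^sub>R (cnj (a m) * cis (of_int (int n - int m) * \<theta>)) \<partial>lborel)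
        = (if m = n then 2 * pi * cnj (a n) else 0)" for m
    proof -
      have "(\<integral>\<theta>. indicator ?S \<theta> *\<^sub>R (cnj (a m) * cis (of_int (int n - int m) * \<theta>)) \<partial>lborel)
          = cnj (a m) * (\<integral>\<theta>. indicator ?S \<theta> *\<^sub>R cis (of_int (int n - int m) * \<theta>) \<partial>lborel)"
        by (simp add: scaleR_conv_of_real mult_ac)
      also have "\<dots> = (if m = n then 2 * pi * cnj (a n) else 0)"
        by (subst int_cis) auto
      finally show ?thesis .
    qed
    ultimately have "(\<lambda>m. if m = n then 2 * pi * cnj (a n) else 0) sums
          (\<integral>\<theta>. indicator ?S \<theta> *\<^sub>R (cis (real n * \<theta>) * cnj (G \<theta>)) \<partial>lborel)" by simp
    moreover have "(\<lambda>m. if m = n then 2 * pi * cnj (a n) else 0) sums (2 * pi * cnj (a n))"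
      using sums_single[of n "\<lambda>_. 2 * pi * cnj (a n)"] by simp
    ultimately show ?thesis using sums_unique2 by blast
  qed
  have s2: "(\<lambda>n. a n * (cis (real n * \<theta>) * cnj (G \<theta>))) sums (G \<theta> * cnj (G \<theta>))" for \<theta>
    using sums_mult2[OF ser[of \<theta>], of "cnj (G \<theta>)"] by (simp add: mult_ac)
  have "(\<lambda>n. \<integral>\<theta>. indicator ?S \<theta> *\<^sub>R (a n * (cis (real n * \<theta>) * cnj (G \<theta>))) \<partial>lborel) sums
        (\<integral>\<theta>. indicator ?S \<theta> *\<^sub>R (G \<theta> * cnj (G \<theta>)) \<partial>lborel)"
  proof (rule integral_series_Icc[OF s2, where b="\<lambda>n. norm (a n) * K"])
    show "continuous_on ?S (\<lambda>\<theta>. a n * (cis (real n * \<theta>) * cnj (G \<theta>)))" for n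
      by (intro continuous_intros gc)
    show "norm (a n * (cis (real n * \<theta>) * cnj (G \<theta>))) \<le> norm (a n) * K" for n \<theta>
      using Gb[of \<theta>] by (simp add: norm_mult K_def mult_left_mono)
    show "summable (\<lambda>n. norm (a n) * K)" using sa by (rule summable_mult2)
  qed
  moreover have "(\<integral>\<theta>. indicator ?S \<theta> *\<^sub>R (a n * (cis (real n * \<theta>) * cnj (G \<theta>))) \<partial>lborel)
      = of_real (2 * pi * ((cmod (c n))^2 * cmod z ^ (2*n)))" for n
  proof -
    have "(\<integral>\<theta>. indicator ?S \<theta> *\<^sub>R (a n * (cis (real n * \<theta>) * cnj (G \<theta>))) \<partial>lborel)
        = a n * (\<integral>\<theta>. indicator ?S \<theta> *\<^sub>R (cis (real n * \<theta>) * cnj (G \<theta>)) \<partial>lborel)"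
      by (simp add: scaleR_conv_of_real mult_ac)
    also have "\<dots> = 2 * pi * (a n * cnj (a n))" by (simp add: inner)
    also have "\<dots> = of_real (2 * pi * ((cmod (c n))^2 * cmod z ^ (2*n)))"
    proof -
      have "(cmod (a n))^2 = (cmod (c n))^2 * cmod z ^ (2*n)"
        by (simp add: a_def norm_mult norm_power power_mult_distrib power_even_eq)
      then show ?thesis by (simp add: complex_norm_square[symmetric])
    qed
    finally show ?thesis .
  qed
  moreover have "(\<integral>\<theta>. indicator ?S \<theta> *\<^sub>R (G \<theta> * cnj (G \<theta>)) \<partial>lborel)
      = of_real (\<integral>\<theta>. indicator ?S \<theta> *\<^sub>R (cmod (G \<theta>))^2 \<partial>lborel)"
  proof -
    have "(\<integral>\<theta>. indicator ?S \<theta> *\<^sub>R (G \<theta> * cnj (G \<theta>)) \<partial>lborel)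
       = (\<integral>\<theta>. complex_of_real (indicator ?S \<theta> *\<^sub>R (cmod (G \<theta>))^2) \<partial>lborel)"
      by (simp add: complex_norm_square[symmetric] scaleR_conv_of_real)
    then show ?thesis by (simp only: integral_complex_of_real)
  qed
  ultimately have "(\<lambda>n. complex_of_real (2 * pi * ((cmod (c n))^2 * cmod z ^ (2*n)))) sums
        of_real (\<integral>\<theta>. indicator ?S \<theta> *\<^sub>R (cmod (G \<theta>))^2 \<partial>lborel)" by simp
  then show ?thesis unfolding G_def by (simp only: sums_of_real_iff)
qed




definition rot :: "real \<Rightarrow> real^2 \<Rightarrow> real^2" where "rot \<theta> y = vv (cis \<theta> * cpx y)"

lemma cpx_eq: "cpx y = complex_of_real (y$1) + \<i> * complex_of_real (y$2)"
  by (simp add: cpx_def complex_eq_iff)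

lemma continuous_cpx [continuous_intros]: "continuous_on S f \<Longrightarrow> continuous_on S (\<lambda>x. cpx (f x))"
  unfolding cpx_eq by (intro continuous_intros)

lemma continuous_vv [continuous_intros]: "continuous_on S f \<Longrightarrow> continuous_on S (\<lambda>x. vv (f x))"
  using bounded_linear_vv by (rule bounded_linear.continuous_on)

lemma cpx_rot [simp]: "cpx (rot \<theta> y) = cis \<theta> * cpx y"
  by (simp add: rot_def)

lemma norm_rot [simp]: "norm (rot \<theta> y) = norm y"
  by (metis norm_cpx cpx_rot norm_mult norm_cis mult_1)

lemma rot_rot: "rot a (rot b y) = rot (a + b) y"
  by (simp add: rot_def cis_mult mult.assoc[symmetric] mult.commute)

lemma rot_0 [simp]: "rot 0 y = y"
  by (simp add: rot_def)

lemma cpx_diff: "cpx (x - y) = cpx x - cpx y"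
  by (simp add: cpx_def complex_eq_iff)

lemma cpx_inj: "cpx x = cpx y \<Longrightarrow> x = y"
  by (metis vv_cpx)

lemma rot_diff: "rot \<theta> x - rot \<theta> y = rot \<theta> (x - y)"
  by (rule cpx_inj) (simp add: cpx_diff algebra_simps)

lemma orth_rot: "orthogonal_transformation (rot \<theta>)"
  unfolding orthogonal_transformation_isometry
proof
  show "rot \<theta> 0 = 0" by (simp add: rot_def cpx_def vv_def vec_eq_iff forall_2)
  show "\<forall>x y. dist (rot \<theta> x) (rot \<theta> y) = dist x y"
    by (simp add: dist_norm rot_diff)
qed

lemma continuous_rot2: "continuous_on UNIV (\<lambda>p::((real^2) \<times> real). rot (snd p) (fst p))"
  unfolding rot_def by (intro continuous_intros)

lemma rot_measurable [measurable]: "rot \<theta> \<in> borel_measurable borel"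
  by (rule borel_measurable_continuous_onI) (unfold rot_def, intro continuous_intros)

lemma rot_vimage: "rot \<theta> -` A = rot (-\<theta>) ` A"
proof safe
  fix x assume "rot \<theta> x \<in> A"
  then show "x \<in> rot (-\<theta>) ` A" by (intro image_eqI[of _ _ "rot \<theta> x"]) (simp_all add: rot_rot)
next
  fix x assume "x \<in> A" then show "rot (-\<theta>) x \<in> rot \<theta> -` A" by (simp add: rot_rot)
qed

lemma distr_rot: "distr lborel borel (rot \<theta>) = lborel"
proof (rule lborel_eqI[symmetric])
  fix l u :: "real^2"
  assume "\<And>b. b \<in> Basis \<Longrightarrow> l \<bullet> b \<le> u \<bullet> b"
  let ?B = "box l u"
  have Bm: "?B \<in> lmeasurable" by simp
  have X: "rot \<theta> -` ?B = rot (-\<theta>) ` ?B" by (rule rot_vimage)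
  have Xm: "rot (-\<theta>) ` ?B \<in> lmeasurable" by (rule measurable_orthogonal_image[OF orth_rot Bm])
  have "rot \<theta> -` ?B \<inter> space borel \<in> sets borel" by (rule measurable_sets[OF rot_measurable]) simp
  then have Xb: "rot \<theta> -` ?B \<in> sets borel" by simp
  have "emeasure (distr lborel borel (rot \<theta>)) ?B = emeasure lborel (rot \<theta> -` ?B)"
    by (subst emeasure_distr) auto
  also have "\<dots> = emeasure lebesgue (rot \<theta> -` ?B)" using Xb by simp
  also have "\<dots> = measure lebesgue (rot (-\<theta>) ` ?B)" using Xm X by (simp add: emeasure_eq_measure2)
  also have "\<dots> = measure lebesgue ?B" using measure_orthogonal_image[OF orth_rot Bm] by simp
  also have "\<dots> = emeasure lebesgue ?B" using Bm by (simp add: emeasure_eq_measure2)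
  also have "\<dots> = emeasure lborel ?B" by simp
  finally show "emeasure (distr lborel borel (rot \<theta>)) ?B = (\<Prod>b\<in>Basis. (u - l) \<bullet> b)"
    using \<open>\<And>b. b \<in> Basis \<Longrightarrow> l \<bullet> b \<le> u \<bullet> b\<close> by (simp add: emeasure_lborel_box)
qed simp

lemma nn_integral_rot:
  assumes [measurable]: "h \<in> borel_measurable borel"
  shows "(\<integral>\<^sup>+ y. h (rot \<theta> y) \<partial>lborel) = (\<integral>\<^sup>+ y. h y \<partial>lborel)"
proof -
  have "(\<integral>\<^sup>+ y. h y \<partial>lborel) = (\<integral>\<^sup>+ y. h y \<partial>distr lborel borel (rot \<theta>))" by (simp add: distr_rot)
  also have "\<dots> = (\<integral>\<^sup>+ y. h (rot \<theta> y) \<partial>lborel)" by (subst nn_integral_distr) auto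
  finally show ?thesis by simp
qed

lemma rot_average:
  fixes h :: "real^2 \<Rightarrow> ennreal"
  assumes [measurable]: "h \<in> borel_measurable borel"
  shows "ennreal (2*pi) * (\<integral>\<^sup>+ y. h y \<partial>lborel) =
    (\<integral>\<^sup>+ y. (\<integral>\<^sup>+ \<theta>. h (rot \<theta> y) * indicator {-pi..pi} \<theta> \<partial>lborel) \<partial>lborel)"
proof -
  have meas: "(\<lambda>p::((real^2) \<times> real). h (rot (snd p) (fst p)) * indicator {-pi..pi} (snd p)) \<in> borel_measurable (lborel \<Otimes>\<^sub>M lborel)"
  proof -
    have "(\<lambda>p::((real^2) \<times> real). rot (snd p) (fst p)) \<in> borel_measurable borel"
      by (rule borel_measurable_continuous_onI[OF continuous_rot2])
    then have "(\<lambda>p::((real^2) \<times> real). h (rot (snd p) (fst p))) \<in> borel_measurable borel"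
      by (rule measurable_compose) simp
    then have [measurable]: "(\<lambda>p::((real^2) \<times> real). h (rot (snd p) (fst p))) \<in> borel_measurable (lborel \<Otimes>\<^sub>M lborel)"
      by (simp add: lborel_prod)
    show ?thesis by measurable
  qed
  have "(\<integral>\<^sup>+ y. (\<integral>\<^sup>+ \<theta>. h (rot \<theta> y) * indicator {-pi..pi} \<theta> \<partial>lborel) \<partial>lborel)
      = (\<integral>\<^sup>+ \<theta>. (\<integral>\<^sup>+ y. h (rot \<theta> y) * indicator {-pi..pi} \<theta> \<partial>lborel) \<partial>lborel)"
    using lborel_pair.Fubini'[of "\<lambda>y \<theta>. h (rot \<theta> y) * indicator {-pi..pi} \<theta>"] meas
    by (simp add: case_prod_unfold)
  also have "\<dots> = (\<integral>\<^sup>+ \<theta>. (\<integral>\<^sup>+ y. h y \<partial>lborel) * indicator {-pi..pi} \<theta> \<partial>lborel)"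
    by (rule nn_integral_cong) (simp add: nn_integral_multc nn_integral_rot)
  also have "\<dots> = (\<integral>\<^sup>+ y. h y \<partial>lborel) * ennreal (2*pi)"
    by (simp add: nn_integral_cmult_indicator mult.commute)
  finally show ?thesis by (simp add: mult.commute)
qed




lemma has_integral_pow:
  fixes a b :: real assumes "a \<le> b"
  shows "((\<lambda>r. r ^ n) has_integral (b ^ (n+1) - a ^ (n+1)) / (n+1)) {a..b}"
proof -
  have "((\<lambda>r. r ^ n) has_integral ((\<lambda>r. r ^ (n+1) / (n+1)) b - (\<lambda>r. r ^ (n+1) / (n+1)) a)) {a..b}"
  proof (rule fundamental_theorem_of_calculus[OF assms])
    fix x :: real
    have "((\<lambda>r. r ^ (n+1) / real (n+1)) has_real_derivative (real (n+1) * x ^ n) / real (n+1)) (at x)"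
      by (intro derivative_eq_intros) auto
    then show "((\<lambda>r. r ^ (n+1) / real (n+1)) has_vector_derivative x ^ n) (at x within {a..b})"
      by (simp add: has_real_derivative_iff_has_vector_derivative[symmetric] has_field_derivative_at_within)
  qed
  then show ?thesis by (simp add: diff_divide_distrib)
qed

lemma ball_borel [measurable]: "ball (0::real^2) 1 \<in> sets borel"
  by (simp add: borel_open)

lemma norm_tail_borel [measurable]: "norm -` {x<..} \<in> sets (borel :: (real^2) measure)"
proof -
  have "norm -` {x<..} = {y::real^2 \<in> space borel. x < norm y}" by auto
  moreover have "{y::real^2 \<in> space borel. x < norm y} \<in> sets borel" by measurable
  ultimately show ?thesis by simp
qed

lemma ind_ball_meas [measurable]: "indicator (ball (0::real^2) 1) \<in> borel_measurable borel"
  by (rule borel_measurable_indicator) (rule ball_borel)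

definition radm :: "real measure" where
  "radm = density lborel (\<lambda>r. ennreal (2 * pi * r) * indicator {0<..<1} r)"

definition ballm :: "real measure" where
  "ballm = distr (density lborel (indicator (ball (0::real^2) 1))) borel norm"

lemma emeasure_ball2: "r \<ge> 0 \<Longrightarrow> emeasure lborel (ball (0::real^2) r) = ennreal (pi * r^2)"
  by (simp add: emeasure_ball unit_ball_vol_2)

lemma emeasure_cball2: "r \<ge> 0 \<Longrightarrow> emeasure lborel (cball (0::real^2) r) = ennreal (pi * r^2)"
  by (simp add: emeasure_cball unit_ball_vol_2)

lemma radm_tail:
  assumes "x < 1"
  shows "emeasure radm {x<..} = ennreal (pi * (1 - (max 0 x)^2))"
proof -
  let ?a = "max 0 x"
  have a: "0 \<le> ?a" "?a < 1" using assms by auto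
  have "emeasure radm {x<..} = (\<integral>\<^sup>+ r. ennreal (2 * pi * r) * indicator {0<..<1} r * indicator {x<..} r \<partial>lborel)"
    unfolding radm_def by (subst emeasure_density) auto
  also have "\<dots> = (\<integral>\<^sup>+ r. ennreal (2 * pi * r) * indicator {?a<..<1} r \<partial>lborel)"
    by (rule nn_integral_cong) (simp add: indicator_def, blast)
  also have "\<dots> = ennreal (pi * (1 - ?a^2))"
  proof (rule nn_integral_has_integral_lebesgue')
    show "0 \<le> 2 * pi * r" if "r \<in> {?a<..<1}" for r using that a by auto
    have "((\<lambda>r. r ^ 1) has_integral (1 ^ 2 - ?a ^ 2) / 2) {?a..1}"
    proof -
      have "?a \<le> 1" using a by simp
      from has_integral_pow[OF this, of 1] show ?thesis by (simp only: one_add_one of_nat_numeral)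
    qed
    then have "((\<lambda>r. (2 * pi) * r ^ 1) has_integral (2 * pi) * ((1 ^ 2 - ?a ^ 2) / 2)) {?a..1}"
      by (rule has_integral_mult_right)
    moreover have "(2 * pi) * ((1 ^ 2 - ?a ^ 2) / 2) = pi * (1 - ?a^2)" by simp
    ultimately have "((\<lambda>r. 2 * pi * r) has_integral pi * (1 - ?a^2)) {?a..1}" by simp
    then show "((\<lambda>r. 2 * pi * r) has_integral pi * (1 - ?a^2)) {?a<..<1}"
      by (simp add: has_integral_Icc_iff_Ioo[symmetric])
  qed
  finally show ?thesis .
qed

lemma ballm_tail:
  assumes "x < 1"
  shows "emeasure ballm {x<..} = ennreal (pi * (1 - (max 0 x)^2))"
proof -
  let ?a = "max 0 x"
  let ?D = "ball (0::real^2) 1"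
  have "emeasure ballm {x<..} = emeasure (density lborel (indicator ?D)) (norm -` {x<..})"
    unfolding ballm_def by (subst emeasure_distr) auto
  also have "\<dots> = (\<integral>\<^sup>+ y. indicator ?D y * indicator (norm -` {x<..}) y \<partial>lborel)"
    by (subst emeasure_density) auto
  also have "\<dots> = emeasure lborel (?D - cball 0 ?a)"
    proof -
    have "(\<integral>\<^sup>+ y. indicator ?D y * indicator (norm -` {x<..}) y \<partial>lborel) = (\<integral>\<^sup>+ y. indicator (?D - cball 0 ?a) y \<partial>lborel)"
      by (rule nn_integral_cong_AE, rule eventually_mono[OF AE_lborel_singleton[of 0]]) (auto simp: indicator_def max_def split: if_splits intro: order_trans[OF norm_ge_zero])
    also have "\<dots> = emeasure lborel (?D - cball 0 ?a)"
      by (rule nn_integral_indicator) (simp add: borel_open borel_closed sets.Diff)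
    finally show ?thesis .
  qed
  also have "\<dots> = emeasure lborel ?D - emeasure lborel (cball (0::real^2) ?a)"
  proof (rule emeasure_Diff)
    show "emeasure lborel (cball (0::real^2) ?a) \<noteq> \<infinity>" by (simp add: emeasure_cball2)
    show "?D \<in> sets lborel" "cball (0::real^2) ?a \<in> sets lborel" by (simp_all add: borel_open borel_closed)
    show "cball (0::real^2) ?a \<subseteq> ?D" using assms by (auto simp: subset_iff)
  qed
  also have "\<dots> = ennreal (pi * (1 - (max 0 x)^2))"
    using assms by (simp add: emeasure_ball2 emeasure_cball2 ennreal_minus algebra_simps)
  finally show ?thesis .
qed

lemma ballm_eq_radm: "ballm = radm"
proof (rule measure_eqI_lessThan)
  show "sets ballm = sets borel" "sets radm = sets borel" by (simp_all add: ballm_def radm_def)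
  show "emeasure ballm {x<..} = emeasure radm {x<..}" for x
  proof (cases "x < 1")
    case True then show ?thesis by (simp add: ballm_tail radm_tail)
  next
    case False
    have "emeasure ballm {x<..} = 0"
    proof -
      have "emeasure ballm {x<..} = emeasure (density lborel (indicator (ball (0::real^2) 1))) (norm -` {x<..})"
        unfolding ballm_def by (subst emeasure_distr) auto
      also have "\<dots> = (\<integral>\<^sup>+ y. indicator (ball (0::real^2) 1) y * indicator (norm -` {x<..}) y \<partial>lborel)"
        by (subst emeasure_density) auto
      also have "\<dots> = (\<integral>\<^sup>+ y. (0::ennreal) \<partial>(lborel::(real^2) measure))" using False by (intro nn_integral_cong) (auto simp: indicator_def)
      also have "\<dots> = 0" by simp
      finally show ?thesis .
    qed
    moreover have "emeasure radm {x<..} = 0"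
    proof -
      have "emeasure radm {x<..} = (\<integral>\<^sup>+ r. ennreal (2 * pi * r) * indicator {0<..<1} r * indicator {x<..} r \<partial>lborel)"
        unfolding radm_def by (subst emeasure_density) auto
      also have "\<dots> = (\<integral>\<^sup>+ y. (0::ennreal) \<partial>(lborel::real measure))" using False by (intro nn_integral_cong) (auto simp: indicator_def)
      finally show ?thesis by simp
    qed
    ultimately show ?thesis by simp
  qed
  show "emeasure ballm {x<..} < \<infinity>" for x
  proof (cases "x < 1")
    case True then show ?thesis by (simp add: ballm_tail)
  next
    case False
    have "emeasure ballm {x<..} \<le> emeasure ballm {0<..}"
      using False by (intro emeasure_mono) (auto simp: ballm_def)
    then show ?thesis using ballm_tail[of 0] by (simp add: top.not_eq_extremum le_less_trans)
  qed
qed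

lemma radial_integral:
  fixes \<phi> :: "real \<Rightarrow> ennreal"
  assumes [measurable]: "\<phi> \<in> borel_measurable borel"
  shows "(\<integral>\<^sup>+ y. \<phi> (norm y) * indicator (ball (0::real^2) 1) y \<partial>lborel) =
         (\<integral>\<^sup>+ r. ennreal (2 * pi * r) * indicator {0<..<1} r * \<phi> r \<partial>lborel)"
proof -
  have "(\<integral>\<^sup>+ r. \<phi> r \<partial>ballm) = (\<integral>\<^sup>+ y. \<phi> (norm y) \<partial>density lborel (indicator (ball (0::real^2) 1)))"
    unfolding ballm_def by (subst nn_integral_distr) auto
  also have "\<dots> = (\<integral>\<^sup>+ y. indicator (ball (0::real^2) 1) y * \<phi> (norm y) \<partial>lborel)"
    by (subst nn_integral_density) auto
  finally have "(\<integral>\<^sup>+ y. \<phi> (norm y) * indicator (ball (0::real^2) 1) y \<partial>lborel) = (\<integral>\<^sup>+ r. \<phi> r \<partial>ballm)"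
    by (simp add: mult.commute)
  also have "\<dots> = (\<integral>\<^sup>+ r. \<phi> r \<partial>radm)" by (simp add: ballm_eq_radm)
  also have "\<dots> = (\<integral>\<^sup>+ r. ennreal (2 * pi * r) * indicator {0<..<1} r * \<phi> r \<partial>lborel)"
    unfolding radm_def by (subst nn_integral_density) auto
  finally show ?thesis .
qed




lemma ennreal_suminf_shift_le: "(\<Sum>n. f (Suc n)) \<le> (\<Sum>n. (f::nat \<Rightarrow> ennreal) n)"
proof -
  have "(\<lambda>n. f (Suc n)) sums (\<Sum>n. f (Suc n))" by (rule summable_sums) (rule summableI)
  then have "f sums ((\<Sum>n. f (Suc n)) + f 0)" by (rule sums_Suc)
  then have "(\<Sum>n. f n) = (\<Sum>n. f (Suc n)) + f 0" by (simp add: sums_iff)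
  then show ?thesis by simp
qed

lemma ring_integral:
  fixes g :: "complex \<Rightarrow> complex" and w :: "real \<Rightarrow> real" and h :: "real^2 \<Rightarrow> ennreal"
  assumes hol: "g holomorphic_on ball 0 1"
    and [measurable]: "h \<in> borel_measurable borel" "w \<in> borel_measurable borel"
    and w0: "\<And>r. 0 \<le> w r"
    and hin: "\<And>y \<theta>. norm y < 1 \<Longrightarrow> h (rot \<theta> y) = ennreal (w (norm y) * (cmod (g (cis \<theta> * cpx y)))^2)"
    and hout: "\<And>y. \<not> norm y < 1 \<Longrightarrow> h y = 0"
  defines "c \<equiv> \<lambda>n. (deriv ^^ n) g 0 / fact n"
  shows "ennreal (2*pi) * (\<integral>\<^sup>+ y. h y \<partial>lborel) =
    (\<Sum>n. ennreal (2 * pi * (cmod (c n))^2) *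
       (\<integral>\<^sup>+ y. ennreal (w (norm y) * norm y ^ (2*n)) * indicator (ball (0::real^2) 1) y \<partial>lborel))"
proof -
  let ?D = "ball (0::real^2) 1"
  let ?S = "{-pi..pi}"
  have inner: "(\<integral>\<^sup>+ \<theta>. h (rot \<theta> y) * indicator ?S \<theta> \<partial>lborel) =
     (\<Sum>n. ennreal (2 * pi * (cmod (c n))^2) * (ennreal (w (norm y) * norm y ^ (2*n)) * indicator ?D y))" for y
  proof (cases "norm y < 1")
    case False
    then show ?thesis using hout by (simp add: indicator_def)
  next
    case True
    let ?z = "cpx y"
    have z: "cmod ?z < 1" using True by simp
    have sums: "(\<lambda>n. 2 * pi * ((cmod (c n))^2 * cmod ?z ^ (2*n))) sums
           (\<integral>\<theta>. indicator ?S \<theta> *\<^sub>R (cmod (g (cis \<theta> * ?z)))^2 \<partial>lborel)"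
      unfolding c_def by (rule parseval_circle[OF hol z])
    have gc: "continuous_on ?S (\<lambda>\<theta>. (cmod (g (cis \<theta> * ?z)))^2)"
    proof -
      have "continuous_on (ball 0 1) g" using hol by (rule holomorphic_on_imp_continuous_on)
      then have "continuous_on ?S (\<lambda>\<theta>. g (cis \<theta> * ?z))"
        by (rule continuous_on_compose2) (auto intro!: continuous_intros simp: norm_mult True)
      then show ?thesis by (intro continuous_intros)
    qed
    have intg: "integrable lborel (\<lambda>\<theta>. indicator ?S \<theta> *\<^sub>R (cmod (g (cis \<theta> * ?z)))^2)"
      by (rule borel_integrable_compact[OF compact_Icc gc])
    then have intg': "integrable lborel (\<lambda>\<theta>. indicator ?S \<theta> * (cmod (g (cis \<theta> * ?z)))^2)"
      by simp
    have "(\<integral>\<^sup>+ \<theta>. h (rot \<theta> y) * indicator ?S \<theta> \<partial>lborel) =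
          (\<integral>\<^sup>+ \<theta>. ennreal (w (norm y) * (indicator ?S \<theta> *\<^sub>R (cmod (g (cis \<theta> * ?z)))^2)) \<partial>lborel)"
      using True by (intro nn_integral_cong) (simp add: hin indicator_def)
    also have "\<dots> = ennreal (\<integral>\<theta>. w (norm y) * (indicator ?S \<theta> *\<^sub>R (cmod (g (cis \<theta> * ?z)))^2) \<partial>lborel)"
      by (rule nn_integral_eq_integral)
         (auto intro!: integrable_mult_right simp: w0 intg intg')
    also have "(\<integral>\<theta>. w (norm y) * (indicator ?S \<theta> *\<^sub>R (cmod (g (cis \<theta> * ?z)))^2) \<partial>lborel)
        = w (norm y) * (\<Sum>n. 2 * pi * ((cmod (c n))^2 * cmod ?z ^ (2*n)))"
      using sums intg intg' by (simp add: sums_iff)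
    also have "\<dots> = (\<Sum>n. 2 * pi * (cmod (c n))^2 * (w (norm y) * norm y ^ (2*n)))"
      using sums by (subst suminf_mult[symmetric]) (auto simp: sums_iff mult_ac)
    also have "ennreal \<dots> = (\<Sum>n. ennreal (2 * pi * (cmod (c n))^2 * (w (norm y) * norm y ^ (2*n))))"
    proof (rule suminf_ennreal2[symmetric])
      show "0 \<le> 2 * pi * (cmod (c n))^2 * (w (norm y) * norm y ^ (2*n))" for n by (simp add: w0)
      show "summable (\<lambda>n. 2 * pi * (cmod (c n))^2 * (w (norm y) * norm y ^ (2*n)))"
        using summable_mult[OF sums_summable[OF sums], of "w (norm y)"] by (simp add: mult_ac)
    qed
    also have "\<dots> = (\<Sum>n. ennreal (2 * pi * (cmod (c n))^2) * (ennreal (w (norm y) * norm y ^ (2*n)) * indicator ?D y))"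
      using True by (intro suminf_cong) (simp add: ennreal_mult' w0)
    finally show ?thesis .
  qed
  have "ennreal (2*pi) * (\<integral>\<^sup>+ y. h y \<partial>lborel) =
    (\<integral>\<^sup>+ y. (\<integral>\<^sup>+ \<theta>. h (rot \<theta> y) * indicator ?S \<theta> \<partial>lborel) \<partial>lborel)"
    by (rule rot_average) simp
  also have "\<dots> = (\<integral>\<^sup>+ y. (\<Sum>n. ennreal (2 * pi * (cmod (c n))^2) * (ennreal (w (norm y) * norm y ^ (2*n)) * indicator ?D y)) \<partial>lborel)"
    by (simp add: inner)
  also have "\<dots> = (\<Sum>n. \<integral>\<^sup>+ y. ennreal (2 * pi * (cmod (c n))^2) * (ennreal (w (norm y) * norm y ^ (2*n)) * indicator ?D y) \<partial>lborel)"
    by (rule nn_integral_suminf) measurable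
  also have "\<dots> = (\<Sum>n. ennreal (2 * pi * (cmod (c n))^2) *
       (\<integral>\<^sup>+ y. ennreal (w (norm y) * norm y ^ (2*n)) * indicator ?D y \<partial>lborel))"
    by (intro suminf_cong nn_integral_cmult) measurable
  finally show ?thesis .
qed




lemma poly_integral_01:
  fixes k :: nat
  shows "((\<lambda>r. 2 * pi * r * (2 * (1 - r)^2 * r ^ k)) has_integral
           4 * pi * (1 / (k+2) - 2 / (k+3) + 1 / (k+4))) {0..1}"
proof -
  have i1: "((\<lambda>r::real. r ^ (k+1)) has_integral 1 / (k+2)) {0..1}"
    using has_integral_pow[of 0 1 "k+1"] by (simp add: add_ac power_0_left)
  have i2: "((\<lambda>r::real. r ^ (k+2)) has_integral 1 / (k+3)) {0..1}"
    using has_integral_pow[of 0 1 "k+2"] by (simp add: add_ac power_0_left)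
  have i3: "((\<lambda>r::real. r ^ (k+3)) has_integral 1 / (k+4)) {0..1}"
    using has_integral_pow[of 0 1 "k+3"] by (simp add: add_ac power_0_left)
  have "((\<lambda>r. 4 * pi * (r ^ (k+1) - 2 * r ^ (k+2) + r ^ (k+3))) has_integral
           4 * pi * (1 / (k+2) - 2 * (1 / (k+3)) + 1 / (k+4))) {0..1}"
    by (intro has_integral_mult_right has_integral_add has_integral_diff i1 i2 i3)
  moreover have eqf: "(\<lambda>r. 4 * pi * (r ^ (k+1) - 2 * r ^ (k+2) + r ^ (k+3))) = (\<lambda>r. 2 * pi * r * (2 * (1 - r)^2 * r ^ k))"
    by (auto simp: fun_eq_iff power2_eq_square power3_eq_cube power_add algebra_simps)
  ultimately show ?thesis by (simp only: eqf mult_1_right times_divide_eq_right)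
qed

lemma pow_integral_01:
  fixes k :: nat
  shows "((\<lambda>r. 2 * pi * r * r ^ k) has_integral 2 * pi * (1 / (k+2))) {0..1}"
proof -
  have i1: "((\<lambda>r::real. r ^ (k+1)) has_integral 1 / (k+2)) {0..1}"
    using has_integral_pow[of 0 1 "k+1"] by (simp add: add_ac power_0_left)
  have "((\<lambda>r. 2 * pi * r ^ (k+1)) has_integral 2 * pi * (1 / (k+2))) {0..1}"
    by (intro has_integral_mult_right i1)
  moreover have eqf: "(\<lambda>r. 2 * pi * r ^ (k+1)) = (\<lambda>r. 2 * pi * r * r ^ k)"
    by (auto simp: fun_eq_iff)
  ultimately show ?thesis by (simp only: eqf)
qed

lemma radial_W:
  fixes k :: nat
  shows "(\<integral>\<^sup>+ y. ennreal (2 * (1 - norm y)^2 * norm y ^ k) * indicator (ball (0::real^2) 1) y \<partial>lborel)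
     = ennreal (4 * pi * (1 / (k+2) - 2 / (k+3) + 1 / (k+4)))"
proof -
  have "(\<integral>\<^sup>+ y. ennreal (2 * (1 - norm y)^2 * norm y ^ k) * indicator (ball (0::real^2) 1) y \<partial>lborel)
     = (\<integral>\<^sup>+ r. ennreal (2 * pi * r) * indicator {0<..<1} r * ennreal (2 * (1 - r)^2 * r ^ k) \<partial>lborel)"
    by (rule radial_integral[where \<phi>="\<lambda>r. ennreal (2 * (1 - r)^2 * r ^ k)"]) measurable
  also have "\<dots> = (\<integral>\<^sup>+ r. ennreal (2 * pi * r * (2 * (1 - r)^2 * r ^ k)) * indicator {0<..<1} r \<partial>lborel)"
    by (intro nn_integral_cong) (auto simp: indicator_def ennreal_mult'[symmetric] mult_ac)
  also have "\<dots> = ennreal (4 * pi * (1 / (k+2) - 2 / (k+3) + 1 / (k+4)))"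
  proof (rule nn_integral_has_integral_lebesgue')
    show "((\<lambda>r. 2 * pi * r * (2 * (1 - r)^2 * r ^ k)) has_integral 4 * pi * (1 / (k+2) - 2 / (k+3) + 1 / (k+4))) {0<..<1}"
      using poly_integral_01[of k] by (simp only: has_integral_Icc_iff_Ioo)
  qed auto
  finally show ?thesis .
qed

lemma radial_R:
  fixes k :: nat
  shows "(\<integral>\<^sup>+ y. ennreal (1 * norm y ^ k) * indicator (ball (0::real^2) 1) y \<partial>lborel)
     = ennreal (2 * pi * (1 / (k+2)))"
proof -
  have "(\<integral>\<^sup>+ y. ennreal (1 * norm y ^ k) * indicator (ball (0::real^2) 1) y \<partial>lborel)
     = (\<integral>\<^sup>+ r. ennreal (2 * pi * r) * indicator {0<..<1} r * ennreal (1 * r ^ k) \<partial>lborel)"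
    by (rule radial_integral[where \<phi>="\<lambda>r. ennreal (1 * r ^ k)"]) measurable
  also have "\<dots> = (\<integral>\<^sup>+ r. ennreal (2 * pi * r * r ^ k) * indicator {0<..<1} r \<partial>lborel)"
    by (intro nn_integral_cong) (auto simp: indicator_def ennreal_mult'[symmetric] mult_ac)
  also have "\<dots> = ennreal (2 * pi * (1 / (k+2)))"
  proof (rule nn_integral_has_integral_lebesgue')
    show "((\<lambda>r. 2 * pi * r * r ^ k) has_integral 2 * pi * (1 / (k+2))) {0<..<1}"
      using pow_integral_01[of k] by (simp only: has_integral_Icc_iff_Ioo)
  qed auto
  finally show ?thesis .
qed

lemma coeff_deriv:
  fixes f :: "complex \<Rightarrow> complex"
  shows "(deriv ^^ n) (deriv f) 0 / fact n = of_nat (Suc n) * ((deriv ^^ Suc n) f 0 / fact (Suc n))"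
proof -
  have H1: "(deriv ^^ n) (deriv f) = (deriv ^^ Suc n) f" by (simp only: funpow_Suc_right o_def)
  have H2: "of_nat (Suc n) * (X / fact (Suc n)) = X / fact n" for X :: complex
  proof -
    have "of_nat (Suc n) \<noteq> (0::complex)" by (rule of_nat_neq_0)
    moreover have "fact n \<noteq> (0::complex)" by simp
    ultimately show ?thesis
      by (simp only: fact_Suc of_nat_mult times_divide_eq_right) (rule nonzero_mult_divide_mult_cancel_left)
  qed
  show ?thesis by (simp only: H1 H2)
qed

lemma e0: fixes A B C :: real assumes "A \<noteq> 0" "B \<noteq> 0" "C \<noteq> 0"
  shows "1/A - 2/B + 1/C = (B*C - 2*A*C + A*B) / (A*B*C)"
  using assms by (simp add: field_simps)

lemma e1: fixes A :: real assumes "0 < A"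
  shows "1/A - 2/(A+1) + 1/(A+2) = 2/(A*(A+1)*(A+2))"
proof -
  have a: "A \<noteq> 0" "A + 1 \<noteq> 0" "A + 2 \<noteq> 0" using assms by linarith+
  have "1/A - 2/(A+1) + 1/(A+2) = ((A+1)*(A+2) - 2*A*(A+2) + A*(A+1)) / (A*(A+1)*(A+2))"
    by (rule e0[OF a])
  also have "(A+1)*(A+2) - 2*A*(A+2) + A*(A+1) = 2" by (simp add: algebra_simps power2_eq_square)
  finally show ?thesis .
qed

lemma e2: fixes A :: real assumes "0 < A"
  shows "(A/2)^2 * (2 * (2/(A*(A+1)*(A+2)))) \<le> 1 / (A+2)"
proof -
  have "(A/2)^2 * (2 * (2/(A*(A+1)*(A+2)))) = A / ((A+1)*(A+2))"
    using assms by (simp add: power2_eq_square)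
  also have "\<dots> \<le> 1 / (A+2)"
    using assms by (simp add: divide_simps)
  finally show ?thesis .
qed

lemma term_ineq:
  fixes n :: nat and A :: real
  assumes "0 \<le> A"
  shows "2 * pi * ((real (Suc n))^2 * A) * (4 * pi * (1 / (real (2*n)+2) - 2 / (real (2*n)+3) + 1 / (real (2*n)+4)))
         \<le> 2 * pi * A * (2 * pi * (1 / (real (2 * Suc n) + 2)))"
proof -
  define B where "B = real (2*n) + 2"
  have B: "0 < B" by (simp add: B_def)
  have sB: "real (Suc n) = B / 2" by (simp add: B_def)
  have b3: "real (2*n)+3 = B + 1" "real (2*n)+4 = B + 2" "real (2 * Suc n) + 2 = B + 2"
    by (simp_all add: B_def)
  have key: "(real (Suc n))^2 * (2 * (1 / (real (2*n)+2) - 2 / (real (2*n)+3) + 1 / (real (2*n)+4)))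
       \<le> 1 / (real (2 * Suc n) + 2)"
    unfolding b3 sB B_def[symmetric] e1[OF B] by (rule e2[OF B])
  have "2 * pi * ((real (Suc n))^2 * A) * (4 * pi * (1 / (real (2*n)+2) - 2 / (real (2*n)+3) + 1 / (real (2*n)+4)))
      = (2 * pi * A * (2 * pi)) * ((real (Suc n))^2 * (2 * (1 / (real (2*n)+2) - 2 / (real (2*n)+3) + 1 / (real (2*n)+4))))"
    by (simp add: algebra_simps)
  also have "\<dots> \<le> (2 * pi * A * (2 * pi)) * (1 / (real (2 * Suc n) + 2))"
    by (rule mult_left_mono[OF key]) (use assms in simp)
  finally show ?thesis by (simp add: mult_ac)
qed




lemma partial_cont:
  assumes H: "harmonic_on u (ball 0 1)"
  shows "continuous_on (ball 0 1) (partial u k)"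
proof -
  note hp = harmonic_parts[OF H]
  show ?thesis
    by (rule continuous_at_imp_continuous_on)
       (use hp(2) in \<open>blast intro: differentiable_imp_continuous_within\<close>)
qed

lemma grad_sq_cont:
  assumes H: "harmonic_on u (ball 0 1)"
  shows "continuous_on (ball 0 1) (grad_sq u)"
  unfolding grad_sq_def[abs_def] sum_2
  by (intro continuous_intros partial_cont[OF H])

lemma hess_sq_cont:
  assumes H: "harmonic_on u (ball 0 1)"
  shows "continuous_on (ball 0 1) (hess_sq u)"
  using harmonic_parts(3)[OF H]
  unfolding hess_sq_def[abs_def] sum_2
  by (intro continuous_intros) auto

lemma ennreal_ind_meas:
  fixes F :: "real^2 \<Rightarrow> real"
  assumes "continuous_on (ball 0 1) F"
  shows "(\<lambda>y. ennreal (F y) * indicator (ball (0::real^2) 1) y) \<in> borel_measurable borel"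
proof -
  have "(\<lambda>y. indicator (ball (0::real^2) 1) y *\<^sub>R F y) \<in> borel_measurable borel"
    by (rule borel_measurable_continuous_on_indicator) (simp_all add: borel_open assms)
  then have "(\<lambda>y. ennreal (indicator (ball (0::real^2) 1) y *\<^sub>R F y)) \<in> borel_measurable borel"
    by measurable
  moreover have "(\<lambda>y. ennreal (indicator (ball (0::real^2) 1) y *\<^sub>R F y)) = (\<lambda>y. ennreal (F y) * indicator (ball (0::real^2) 1) y)"
    by (auto simp: fun_eq_iff indicator_def)
  ultimately show ?thesis by simp
qed

theorem lemmaB2:
  fixes u :: "real^2 \<Rightarrow> real"
  assumes "harmonic_on u (ball 0 1)"
    and "(\<integral>\<^sup>+ y \<in> ball 0 1. ennreal (grad_sq u y) \<partial>lborel) < \<infinity>"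
  shows "(\<integral>\<^sup>+ y \<in> ball 0 1. ennreal ((1 - norm y)^2 * hess_sq u y) \<partial>lborel)
           \<le> (\<integral>\<^sup>+ y \<in> ball 0 1. ennreal (grad_sq u y) \<partial>lborel)"
proof -
  note H = assms(1)
  let ?D = "ball (0::real^2) 1"
  define f where "f = fh u"
  define g where "g = deriv f"
  have hf: "f holomorphic_on ball 0 1" unfolding f_def by (rule fh_holo[OF H])
  have hg: "g holomorphic_on ball 0 1" unfolding g_def by (rule holomorphic_deriv[OF hf open_ball])
  define cf where "cf = (\<lambda>n. (deriv ^^ n) f 0 / fact n)"
  define cg where "cg = (\<lambda>n. (deriv ^^ n) g 0 / fact n)"
  have cgf: "cg n = of_nat (Suc n) * cf (Suc n)" for n
    unfolding cg_def cf_def g_def by (rule coeff_deriv)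
  define h1 where "h1 = (\<lambda>y. ennreal (grad_sq u y) * indicator ?D y)"
  define h2 where "h2 = (\<lambda>y. ennreal ((1 - norm y)^2 * hess_sq u y) * indicator ?D y)"
  have m1: "h1 \<in> borel_measurable borel"
    unfolding h1_def by (rule ennreal_ind_meas[OF grad_sq_cont[OF H]])
  have m2: "h2 \<in> borel_measurable borel"
    unfolding h2_def by (rule ennreal_ind_meas) (intro continuous_intros hess_sq_cont[OF H])
  have R: "ennreal (2*pi) * (\<integral>\<^sup>+ y. h1 y \<partial>lborel) =
    (\<Sum>n. ennreal (2 * pi * (cmod (cf n))^2) *
       (\<integral>\<^sup>+ y. ennreal (1 * norm y ^ (2*n)) * indicator ?D y \<partial>lborel))"
    unfolding cf_def
  proof (rule ring_integral[OF hf m1])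
    fix y :: "real^2" and \<theta> assume y: "norm y < 1"
    then show "h1 (rot \<theta> y) = ennreal (1 * (cmod (f (cis \<theta> * cpx y)))\<^sup>2)"
      by (simp add: h1_def grad_sq_fh f_def)
  next
    fix y :: "real^2" assume "\<not> norm y < 1"
    then show "h1 y = 0" by (simp add: h1_def)
  qed auto
  have L: "ennreal (2*pi) * (\<integral>\<^sup>+ y. h2 y \<partial>lborel) =
    (\<Sum>n. ennreal (2 * pi * (cmod (cg n))^2) *
       (\<integral>\<^sup>+ y. ennreal ((\<lambda>r. 2 * (1 - r)^2) (norm y) * norm y ^ (2*n)) * indicator ?D y \<partial>lborel))"
    unfolding cg_def
  proof (rule ring_integral[OF hg m2])
    fix y :: "real^2" and \<theta> assume y: "norm y < 1"
    have "hess_sq u (rot \<theta> y) = 2 * (cmod (fd u (cpx (rot \<theta> y))))^2"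
      by (rule hess_sq_fd[OF H]) (simp add: y)
    also have "fd u (cpx (rot \<theta> y)) = g (cis \<theta> * cpx y)"
      unfolding g_def f_def using y by (simp add: deriv_fh[OF H] norm_mult)
    finally show "h2 (rot \<theta> y) = ennreal ((\<lambda>r. 2 * (1 - r)^2) (norm y) * (cmod (g (cis \<theta> * cpx y)))\<^sup>2)"
      using y by (simp add: h2_def mult_ac)
  next
    fix y :: "real^2" assume "\<not> norm y < 1"
    then show "h2 y = 0" by (simp add: h2_def)
  qed (auto)
  have R': "ennreal (2*pi) * (\<integral>\<^sup>+ y. h1 y \<partial>lborel) =
    (\<Sum>n. ennreal (2 * pi * (cmod (cf n))^2) * ennreal (2 * pi * (1 / (real (2*n) + 2))))"
    unfolding R radial_R by (simp add: add.commute)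
  have L': "ennreal (2*pi) * (\<integral>\<^sup>+ y. h2 y \<partial>lborel) =
    (\<Sum>n. ennreal (2 * pi * (cmod (cg n))^2) * ennreal (4 * pi * (1 / (real (2*n)+2) - 2 / (real (2*n)+3) + 1 / (real (2*n)+4))))"
    unfolding L by (simp only: radial_W of_nat_add of_nat_numeral)
  have termle: "ennreal (2 * pi * (cmod (cg n))^2) * ennreal (4 * pi * (1 / (real (2*n)+2) - 2 / (real (2*n)+3) + 1 / (real (2*n)+4)))
     \<le> ennreal (2 * pi * (cmod (cf (Suc n)))^2) * ennreal (2 * pi * (1 / (real (2 * Suc n) + 2)))" for n
  proof -
    define B where "B = real (2*n) + 2"
    have B: "0 < B" by (simp add: B_def)
    have Wpos: "0 \<le> 4 * pi * (1 / (real (2*n)+2) - 2 / (real (2*n)+3) + 1 / (real (2*n)+4))"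
    proof -
      have b3: "real (2*n)+3 = B + 1" "real (2*n)+4 = B + 2" by (simp_all add: B_def)
      show ?thesis unfolding b3 B_def[symmetric] e1[OF B] using B by simp
    qed
    have c: "(cmod (cg n))^2 = (real (Suc n))^2 * (cmod (cf (Suc n)))^2"
      by (simp only: cgf norm_mult norm_of_nat power_mult_distrib)
    have "ennreal (2 * pi * (cmod (cg n))^2) * ennreal (4 * pi * (1 / (real (2*n)+2) - 2 / (real (2*n)+3) + 1 / (real (2*n)+4)))
      = ennreal (2 * pi * ((real (Suc n))^2 * (cmod (cf (Suc n)))^2) * (4 * pi * (1 / (real (2*n)+2) - 2 / (real (2*n)+3) + 1 / (real (2*n)+4))))"
      using Wpos by (simp add: c ennreal_mult[symmetric])
    also have "\<dots> \<le> ennreal (2 * pi * (cmod (cf (Suc n)))^2 * (2 * pi * (1 / (real (2 * Suc n) + 2))))"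
      by (rule ennreal_leI[OF term_ineq]) simp
    also have "\<dots> = ennreal (2 * pi * (cmod (cf (Suc n)))^2) * ennreal (2 * pi * (1 / (real (2 * Suc n) + 2)))"
      by (rule ennreal_mult) auto
    finally show ?thesis .
  qed
  have "ennreal (2*pi) * (\<integral>\<^sup>+ y. h2 y \<partial>lborel) \<le> ennreal (2*pi) * (\<integral>\<^sup>+ y. h1 y \<partial>lborel)"
  proof -
    have "ennreal (2*pi) * (\<integral>\<^sup>+ y. h2 y \<partial>lborel) \<le>
      (\<Sum>n. ennreal (2 * pi * (cmod (cf (Suc n)))^2) * ennreal (2 * pi * (1 / (real (2 * Suc n) + 2))))"
      unfolding L' by (intro suminf_le termle summableI)
    also have "\<dots> \<le> (\<Sum>n. ennreal (2 * pi * (cmod (cf n))^2) * ennreal (2 * pi * (1 / (real (2*n) + 2))))"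
      by (rule ennreal_suminf_shift_le[where f="\<lambda>n. ennreal (2 * pi * (cmod (cf n))^2) * ennreal (2 * pi * (1 / (real (2*n) + 2)))"])
    finally show ?thesis unfolding R' .
  qed
  then have "(\<integral>\<^sup>+ y. h2 y \<partial>lborel) \<le> (\<integral>\<^sup>+ y. h1 y \<partial>lborel)"
    by (subst (asm) ennreal_mult_le_mult_iff) auto
  then show ?thesis by (simp add: h1_def h2_def)
qed


end
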